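(* Let $n\ge3$ and $0<t\le\frac1{\sqrt2}$ with $t\ne\frac3{n+2}$. Then $e_1$ is a local extremum of $A(\cdot,t)$ on $S^{n-1}$: (a) a local maximum if $\frac3{n+2}<t\le\frac1{\sqrt2}$; (b) a local minimum if $0<t<\frac3{n+2}$. For $n=2$, $e_1$ is a local minimum of $A(\cdot,t)$ for $0<t<\frac34$.
   Context: $K=B(\ell_1^n)=\{x\in\mathbb{R}^n:\|x\|_1\le1\}$ is the cross-polytope. For $a\in S^{n-1}$ and $t\in\mathbb{R}$, $H_t(a)=\{x\in\mathbb{R}^n:\langle a,x\rangle=t\}$ and $A(a,t)=\mathrm{vol}_{n-1}(H_t(a)\cap K)$. $e_1=(1,0,\dots,0)$. Local extremum is with respect to a neighborhood of $e_1$ in $S^{n-1}$. *)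

theory Defs
  imports "HOL-Analysis.Analysis"
begin

definition cross_polytope :: "(real^'n) set" where
  "cross_polytope = {x. (\<Sum>i\<in>UNIV. \<bar>x $ i\<bar>) \<le> 1}"

definition hyperplane_param :: "'m::finite itself \<Rightarrow> real^'n \<Rightarrow> (real^'m \<Rightarrow> real^'n)" where
  "hyperplane_param _ a = (SOME U. linear U \<and> (\<forall>y. norm (U y) = norm y) \<and>
       range U = {x. a \<bullet> x = 0})"

text \<open>A(a,t) = vol_(n-1)(H_t(a) \<inter> K), where H_t(a) = t a + a^perp for unit a, computed as
  the (n-1)-dimensional Lebesgue measure of the preimage under an isometric
  parametrization of the hyperplane (here 'm plays the role of R^(n-1)).\<close>
definition section_area :: "'m::finite itself \<Rightarrow> real^'n \<Rightarrow> real \<Rightarrow> real" where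
  "section_area m a t =
     measure lebesgue {y :: real^'m. t *\<^sub>R a + hyperplane_param m a y \<in> cross_polytope}"

definition is_local_max_sphere :: "(real^'n \<Rightarrow> real) \<Rightarrow> real^'n \<Rightarrow> bool" where
  "is_local_max_sphere f p \<longleftrightarrow> (\<exists>e>0. \<forall>a. norm a = 1 \<and> dist a p < e \<longrightarrow> f a \<le> f p)"

definition is_local_min_sphere :: "(real^'n \<Rightarrow> real) \<Rightarrow> real^'n \<Rightarrow> bool" where
  "is_local_min_sphere f p \<longleftrightarrow> (\<exists>e>0. \<forall>a. norm a = 1 \<and> dist a p < e \<longrightarrow> f p \<le> f a)"

end

theory Submission
  imports Defs
begin


proposition
 fixes f :: "real^'n::finite \<Rightarrow> real^'n"
  assumes "linear f" "S \<in> lmeasurable"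
  shows measurable_linear_image_fin: "(f ` S) \<in> lmeasurable"
    and measure_linear_image_fin: "measure lebesgue (f ` S) = \<bar>det (matrix f)\<bar> * measure lebesgue S" (is "?Q f S")
proof -
  have "\<forall>S \<in> lmeasurable. (f ` S) \<in> lmeasurable \<and> ?Q f S"
  proof (rule induct_linear_elementary [OF \<open>linear f\<close>]; intro ballI)
    fix f g and S :: "(real,'n) vec set"
    assume "linear f" and "linear g"
      and f [rule_format]: "\<forall>S \<in> lmeasurable. f ` S \<in> lmeasurable \<and> ?Q f S"
      and g [rule_format]: "\<forall>S \<in> lmeasurable. g ` S \<in> lmeasurable \<and> ?Q g S"
      and S: "S \<in> lmeasurable"
    then have gS: "g ` S \<in> lmeasurable"
      by blast
    show "(f \<circ> g) ` S \<in> lmeasurable \<and> ?Q (f \<circ> g) S"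
      using f [OF gS] g [OF S] matrix_compose [OF \<open>linear g\<close> \<open>linear f\<close>]
      by (simp add: o_def image_comp abs_mult det_mul)
  next
    fix f :: "real^'n::_ \<Rightarrow> real^'n::_" and i and S :: "(real^'n::_) set"
    assume "linear f" and 0: "\<And>x. f x $ i = 0" and "S \<in> lmeasurable"
    then have "\<not> inj f"
      by (metis (full_types) linear_injective_imp_surjective one_neq_zero surjE vec_component)
    have detf: "det (matrix f) = 0"
      using \<open>\<not> inj f\<close> det_nz_iff_inj[OF \<open>linear f\<close>] by blast
    show "f ` S \<in> lmeasurable \<and> ?Q f S"
    proof
      show "f ` S \<in> lmeasurable"
        using lmeasurable_iff_indicator_has_integral \<open>linear f\<close> \<open>\<not> inj f\<close> negligible_UNIV negligible_linear_singular_image by blast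
      have "measure lebesgue (f ` S) = 0"
        by (meson \<open>\<not> inj f\<close> \<open>linear f\<close> negligible_imp_measure0 negligible_linear_singular_image)
      also have "\<dots> = \<bar>det (matrix f)\<bar> * measure lebesgue S"
        by (simp add: detf)
      finally show "?Q f S" .
    qed
  next
    fix c and S :: "(real^'n::_) set"
    assume "S \<in> lmeasurable"
    show "(\<lambda>a. \<chi> i. c i * a $ i) ` S \<in> lmeasurable \<and> ?Q (\<lambda>a. \<chi> i. c i * a $ i) S"
    proof
      show "(\<lambda>a. \<chi> i. c i * a $ i) ` S \<in> lmeasurable"
        by (simp add: \<open>S \<in> lmeasurable\<close> measurable_stretch)
      show "?Q (\<lambda>a. \<chi> i. c i * a $ i) S"
        by (simp add: measure_stretch [OF \<open>S \<in> lmeasurable\<close>, of c] axis_def matrix_def det_diagonal)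
    qed
  next
    fix m :: "'n" and n :: "'n" and S :: "(real, 'n) vec set"
    assume "m \<noteq> n" and "S \<in> lmeasurable"
    let ?h = "\<lambda>v::(real, 'n) vec. \<chi> i. v $ Transposition.transpose m n i"
    have lin: "linear ?h"
      by (rule linearI) (simp_all add: plus_vec_def scaleR_vec_def)
    have meq: "measure lebesgue ((\<lambda>v::(real, 'n) vec. \<chi> i. v $ Transposition.transpose m n i) ` cbox a b)
             = measure lebesgue (cbox a b)" for a b
    proof (cases "cbox a b = {}")
      case True then show ?thesis
        by simp
    next
      case False
      then have him: "?h ` (cbox a b) \<noteq> {}"
        by blast
      have eq: "?h ` (cbox a b) = cbox (?h a) (?h b)"
        by (auto simp: image_iff lambda_swap_Galois mem_box_cart) (metis transpose_involutory)+
      show ?thesis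
        using him prod.permute [OF permutes_swap_id, where S=UNIV and g="\<lambda>i. (b - a)$i", symmetric]
        by (simp add: eq content_cbox_cart False)
    qed
    have "(\<chi> i j. if Transposition.transpose m n i = j then 1 else 0) = (\<chi> i j. if j = Transposition.transpose m n i then 1 else (0::real))"
      by (auto intro!: Cart_lambda_cong)
    then have "matrix ?h = transpose(\<chi> i j. mat 1 $ i $ Transposition.transpose m n j)"
      by (auto simp: matrix_eq transpose_def axis_def mat_def matrix_def)
    then have 1: "\<bar>det (matrix ?h)\<bar> = 1"
      by (simp add: det_permute_columns permutes_swap_id sign_swap_id abs_mult)
    show "?h ` S \<in> lmeasurable \<and> ?Q ?h S"
      using measure_linear_sufficient [OF lin \<open>S \<in> lmeasurable\<close>] meq 1 by force
  next
    fix m n :: "'n" and S :: "(real, 'n) vec set"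
    assume "m \<noteq> n" and "S \<in> lmeasurable"
    let ?h = "\<lambda>v::(real, 'n) vec. \<chi> i. if i = m then v $ m + v $ n else v $ i"
    have lin: "linear ?h"
      by (rule linearI) (auto simp: algebra_simps plus_vec_def scaleR_vec_def vec_eq_iff)
    have "matrix ?h = (\<chi> k. if k = m then row m (mat 1) + 1 *s row n (mat 1) else row k (mat 1))"
      by (auto simp: matrix_def vec_eq_iff axis_def row_def mat_def)
    then have 1: "det(matrix ?h) = 1"
      using det_row_operation[OF \<open>m \<noteq> n\<close>, of "mat 1" 1] by simp
    have meq: "measure lebesgue (?h ` (cbox a b)) = measure lebesgue (cbox a b)" for a b
    proof (cases "cbox a b = {}")
      case True then show ?thesis by simp
    next
      case False
      then have ne: "(+) (\<chi> i. if i = n then - a $ n else 0) ` cbox a b \<noteq> {}"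
        by auto
      let ?v = "\<chi> i. if i = n then - a $ n else 0"
      have "?h ` cbox a b
            = (+) (\<chi> i. if i = m \<or> i = n then a $ n else 0) ` ?h ` (+) ?v ` (cbox a b)"
        using \<open>m \<noteq> n\<close> unfolding image_comp o_def by (force simp: vec_eq_iff)
      then have "measure lebesgue (?h ` (cbox a b))
               = measure lebesgue ((\<lambda>v. \<chi> i. if i = m then v $ m + v $ n else v $ i) `
                                   (+) ?v ` cbox a b)"
        by (rule ssubst) (rule measure_translation)
      also have "\<dots> = measure lebesgue ((\<lambda>v. \<chi> i. if i = m then v $ m + v $ n else v $ i) ` cbox (?v +a) (?v + b))"
        by (metis (no_types, lifting) cbox_translation)
      also have "\<dots> = measure lebesgue ((+) ?v ` cbox a b)"
        apply (subst measure_shear_interval)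
        using \<open>m \<noteq> n\<close> ne apply auto
        apply (simp add: cbox_translation)
        by (metis cbox_borel cbox_translation measure_completion sets_lborel)
      also have "\<dots> = measure lebesgue (cbox a b)"
        by (rule measure_translation)
        finally show ?thesis .
      qed
    show "?h ` S \<in> lmeasurable \<and> ?Q ?h S"
      using measure_linear_sufficient [OF lin \<open>S \<in> lmeasurable\<close>] meq 1 by force
  qed
  with assms show "(f ` S) \<in> lmeasurable" "?Q f S"
    by metis+
qed



definition std_simplex :: "(real^'m::finite) set" where
  "std_simplex = {z. (\<forall>i. 0 \<le> z$i) \<and> (\<Sum>i\<in>UNIV. z$i) \<le> 1}"

lemma std_simplex_lmeasurable: "(std_simplex :: (real^'m::finite) set) \<in> lmeasurable"
proof -
  have "(std_simplex :: (real^'m) set) \<subseteq> cbox 0 1"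
  proof
    fix z :: "real^'m" assume z: "z \<in> std_simplex"
    have "z$i \<le> 1" for i
    proof -
      have "z$i \<le> (\<Sum>j\<in>UNIV. z$j)"
        using z by (intro member_le_sum) (auto simp: std_simplex_def)
      then show ?thesis using z by (auto simp: std_simplex_def)
    qed
    then show "z \<in> cbox 0 1" using z by (auto simp: std_simplex_def mem_box_cart)
  qed
  then have "bounded (std_simplex :: (real^'m) set)" using bounded_cbox bounded_subset by blast
  moreover have "closed (std_simplex :: (real^'m) set)"
    unfolding std_simplex_def
    by (intro closed_Collect_conj closed_Collect_all closed_Collect_le continuous_intros)
  ultimately show ?thesis by (intro lmeasurable_compact) (simp add: compact_eq_bounded_closed)
qed

definition skew_cross :: "real \<Rightarrow> ('m::finite \<Rightarrow> real) \<Rightarrow> real \<Rightarrow> (real^'m) set" where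
  "skew_cross c b r = {v. (\<Sum>i\<in>UNIV. c * \<bar>v$i\<bar> - b i * v$i) \<le> r}"

lemma measure_skew_cross:
  fixes b :: "'m::finite \<Rightarrow> real"
  assumes r: "r > 0" and bc: "\<And>i. \<bar>b i\<bar> < c"
  shows "measure lebesgue (skew_cross c b r) =
         measure lebesgue (std_simplex :: (real^'m) set) * (\<Prod>i\<in>UNIV. 2*c*r / (c^2 - (b i)^2))"
proof -
  define E where "E = PiE (UNIV::'m set) (\<lambda>_. {-1::real, 1})"
  define D where "D = (\<lambda>(e::'m\<Rightarrow>real) (z::real^'m). \<chi> i. (e i * r / (c - e i * b i)) * z$i)"
  have c: "c > 0" using bc[of undefined] by linarith
  have pos: "c - e * b i > 0" if "e \<in> {-1,1}" for e i
    using bc[of i] that by (auto simp: abs_less_iff)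
  have eqU: "skew_cross c b r = (\<Union>e\<in>E. D e ` std_simplex)"
  proof (intro equalityI subsetI)
    fix v :: "real^'m" assume v: "v \<in> skew_cross c b r"
    define e where "e = (\<lambda>i. if v$i \<ge> 0 then 1 else -1::real)"
    define z :: "real^'m" where "z = (\<chi> i. (c - e i * b i) * \<bar>v$i\<bar> / r)"
    have eE: "e \<in> E" by (auto simp: E_def e_def split: if_splits)
    have ev: "e i * \<bar>v$i\<bar> = v$i" for i by (auto simp: e_def)
    have zi: "z$i = (c * \<bar>v$i\<bar> - b i * v$i) / r" for i
      using ev[of i] by (simp add: z_def algebra_simps)
    have "z \<in> std_simplex"
    proof -
      have "0 \<le> z$i" for i
      proof -
        have "e i \<in> {-1,1}" by (simp add: e_def)
        from pos[OF this, of i] r show ?thesis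
          unfolding z_def by (simp add: divide_nonneg_pos)
      qed
      moreover have "(\<Sum>i\<in>UNIV. z$i) \<le> 1"
        using v r by (simp add: zi skew_cross_def sum_divide_distrib[symmetric])
      ultimately show ?thesis by (auto simp: std_simplex_def)
    qed
    moreover have "D e z = v"
    proof -
      have "(e i * r / (c - e i * b i)) * z$i = v$i" for i
      proof -
        have "c + b i > 0" "c - b i > 0" using bc[of i] by (auto simp: abs_less_iff)
        then show ?thesis using r by (auto simp: z_def e_def field_simps)
      qed
      then show ?thesis by (simp add: D_def vec_eq_iff)
    qed
    ultimately show "v \<in> (\<Union>e\<in>E. D e ` std_simplex)" using eE by blast
  next
    fix v :: "real^'m" assume "v \<in> (\<Union>e\<in>E. D e ` std_simplex)"
    then obtain e z where eE: "e \<in> E" and z: "z \<in> std_simplex" and vz: "v = D e z" by blast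
    have e: "e i \<in> {-1,1}" for i using eE by (auto simp: E_def)
    have "c * \<bar>v$i\<bar> - b i * v$i = r * z$i" for i
    proof -
      have zi: "z$i \<ge> 0" using z by (auto simp: std_simplex_def)
      have vi: "v$i = e i * (r * z$i / (c - e i * b i))" using vz by (simp add: D_def)
      have nn: "r * z$i / (c - e i * b i) \<ge> 0" using pos[OF e[of i], of i] r zi by simp
      have "\<bar>v$i\<bar> = \<bar>e i\<bar> * \<bar>r * z$i / (c - e i * b i)\<bar>" by (simp add: vi abs_mult)
      also have "\<dots> = r * z$i / (c - e i * b i)" using e[of i] abs_of_nonneg[OF nn] by auto
      finally have av: "\<bar>v$i\<bar> = r * z$i / (c - e i * b i)" .
      have "c * \<bar>v$i\<bar> - b i * v$i = c * (r * z$i / (c - e i * b i)) - b i * (e i * (r * z$i / (c - e i * b i)))"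
        unfolding av by (subst vi) (rule refl)
      also have "\<dots> = (c - e i * b i) * (r * z$i / (c - e i * b i))"
        by (simp only: left_diff_distrib mult.assoc mult.left_commute)
      also have "\<dots> = r * z$i" using pos[OF e[of i], of i] by simp
      finally show ?thesis .
    qed
    then have "(\<Sum>i\<in>UNIV. c * \<bar>v$i\<bar> - b i * v$i) = r * (\<Sum>i\<in>UNIV. z$i)"
      by (simp add: sum_distrib_left)
    also have "\<dots> \<le> r" using z r by (simp add: std_simplex_def)
    finally show "v \<in> skew_cross c b r" by (simp add: skew_cross_def)
  qed
  have linD: "linear (D e)" for e
    by (auto simp: D_def linear_iff vec_eq_iff algebra_simps add_divide_distrib)
  have measD: "measure lebesgue (D e ` std_simplex) = (\<Prod>i\<in>UNIV. r / (c - e i * b i)) * measure lebesgue (std_simplex::(real^'m) set)"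
    if "e \<in> E" for e
  proof -
    have e: "e i \<in> {-1,1}" for i using that by (auto simp: E_def)
    have "measure lebesgue (D e ` std_simplex) = \<bar>prod (\<lambda>i. e i * r / (c - e i * b i)) UNIV\<bar> * measure lebesgue (std_simplex::(real^'m) set)"
      unfolding D_def by (rule measure_stretch[OF std_simplex_lmeasurable])
    moreover have "\<bar>prod (\<lambda>i. e i * r / (c - e i * b i)) UNIV\<bar> = (\<Prod>i\<in>UNIV. r / (c - e i * b i))"
    proof -
      have "\<bar>e i * r / (c - e i * b i)\<bar> = r / (c - e i * b i)" for i
        using e[of i] pos[OF e[of i], of i] r by (auto simp: abs_mult)
      then show ?thesis by (simp add: abs_prod)
    qed
    ultimately show ?thesis by simp
  qed
  have negl: "pairwise (\<lambda>e e'. negligible (D e ` std_simplex \<inter> D e' ` std_simplex)) E"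
  proof (clarsimp simp: pairwise_def)
    fix e e' assume eE: "e \<in> E" and e'E: "e' \<in> E" and ne: "e \<noteq> e'"
    then obtain i where i: "e i \<noteq> e' i" by (auto simp: fun_eq_iff)
    have ei: "e i \<in> {-1,1}" "e' i \<in> {-1,1}" using eE e'E by (auto simp: E_def)
    have "D e ` std_simplex \<inter> D e' ` std_simplex \<subseteq> {x. x$i = 0}"
    proof clarify
      fix z z' assume z: "z \<in> std_simplex" and z': "z' \<in> std_simplex" and eq: "D e z = D e' z'"
      have "z$i \<ge> 0" "z'$i \<ge> 0" using z z' by (auto simp: std_simplex_def)
      then have a: "e i * (D e z $ i) \<ge> 0" and b: "e' i * (D e' z' $ i) \<ge> 0"
        using ei pos[OF ei(1), of i] pos[OF ei(2), of i] r by (auto simp: D_def)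
      have "e' i = - e i" using ei i by auto
      then show "D e z $ i = 0" using a b eq ei by (auto simp: mult_le_0_iff zero_le_mult_iff)
    qed
    then show "negligible (D e ` std_simplex \<inter> D e' ` std_simplex)"
      using negligible_subset[OF negligible_standard_hyperplane_cart] by blast
  qed
  have finE: "finite E" by (simp add: E_def finite_PiE)
  have "measure lebesgue (skew_cross c b r) = (\<Sum>e\<in>E. measure lebesgue (D e ` std_simplex))"
    unfolding eqU
    by (rule measure_negligible_finite_Union_image[OF finE _ negl])
       (unfold D_def, rule measurable_stretch[OF std_simplex_lmeasurable])
  also have "\<dots> = (\<Sum>e\<in>E. \<Prod>i\<in>UNIV. r / (c - e i * b i)) * measure lebesgue (std_simplex::(real^'m) set)"
    by (simp add: measD sum_distrib_right)
  also have "(\<Sum>e\<in>E. \<Prod>i\<in>UNIV. r / (c - e i * b i)) = (\<Prod>i\<in>UNIV. \<Sum>e\<in>{-1,1}. r / (c - e * b i))"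
    unfolding E_def by (rule prod_sum_PiE[symmetric]) auto
  also have "\<dots> = (\<Prod>i\<in>UNIV. 2*c*r / (c^2 - (b i)^2))"
  proof (rule prod.cong[OF refl])
    fix i
    have p1: "c - b i > 0" "c + b i > 0" using bc[of i] by (auto simp: abs_less_iff)
    have "c^2 - (b i)^2 = (c - b i) * (c + b i)" by (simp add: power2_eq_square algebra_simps)
    then show "(\<Sum>e\<in>{-1,1}. r / (c - e * b i)) = 2*c*r / (c^2 - (b i)^2)"
      using p1 by (simp add: field_simps)
  qed
  finally show ?thesis by simp
qed



lemma polar_quad:
  fixes G :: "'a::real_inner \<Rightarrow> 'b::real_inner"
  assumes lin: "linear G" and nq: "\<And>y. norm (G y)^2 = norm y^2 - Q y"
    and Qp: "\<And>x y. Q (x + y) = Q x + Q y + 2 * B x y"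
  shows "G x \<bullet> G y = x \<bullet> y - B x y"
proof -
  have "G x \<bullet> G y = ((norm (G x + G y))\<^sup>2 - (norm (G x))\<^sup>2 - (norm (G y))\<^sup>2) / 2"
    by (rule dot_norm)
  also have "G x + G y = G (x + y)" using lin by (simp add: linear_add)
  finally have "G x \<bullet> G y = ((norm (G (x+y)))\<^sup>2 - (norm (G x))\<^sup>2 - (norm (G y))\<^sup>2) / 2" .
  also have "\<dots> = ((norm (x+y))\<^sup>2 - (norm x)\<^sup>2 - (norm y)\<^sup>2) / 2 - B x y"
    by (simp add: nq Qp field_simps)
  also have "\<dots> = x \<bullet> y - B x y" by (simp add: dot_norm)
  finally show ?thesis .
qed

lemma det_gram_axis:
  fixes G :: "real^'m::finite \<Rightarrow> real^'m" and j :: 'm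
  assumes lin: "linear G" and nq: "\<And>y. norm (G y)^2 = norm y^2 - \<alpha> * (y$j)^2"
  shows "(det (matrix G))^2 = 1 - \<alpha>"
proof -
  have ip: "G x \<bullet> G y = x \<bullet> y - \<alpha> * (x$j * y$j)" for x y
    by (rule polar_quad[OF lin nq]) (simp add: power2_eq_square algebra_simps)
  define M where "M = matrix G"
  have col: "(\<chi> p. M $ p $ i) = G (axis i 1)" for i
    by (simp add: M_def matrix_def vec_eq_iff)
  have "transpose M ** M = (\<chi> i l. if i = l then (if i = j then 1 - \<alpha> else 1) else 0)"
  proof -
    have "(transpose M ** M) $ i $ l = G (axis i 1) \<bullet> G (axis l 1)" for i l
      by (simp add: matrix_matrix_mult_def transpose_def inner_vec_def col[symmetric])
    moreover have "axis i (1::real) $ j = (if i = j then 1 else 0)" for i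
      by (simp add: axis_def)
    ultimately show ?thesis
      by (auto simp: vec_eq_iff ip inner_axis_axis)
  qed
  then have "det (transpose M ** M) = (\<Prod>i\<in>UNIV. if i = j then 1 - \<alpha> else 1)"
    by (simp add: det_diagonal)
  also have "\<dots> = 1 - \<alpha>" by (simp add: prod.If_cases)
  finally show ?thesis by (simp add: det_mul det_transpose power2_eq_square M_def)
qed

lemma det_gram:
  fixes P :: "real^'m::finite \<Rightarrow> real^'m" and q :: "real^'m"
  assumes lin: "linear P" and nq: "\<And>y. norm (P y)^2 = norm y^2 - (q \<bullet> y)^2" and q1: "q \<bullet> q \<le> 1"
  shows "\<bar>det (matrix P)\<bar> = sqrt (1 - q \<bullet> q)"
proof -
  obtain j :: 'm where True by blast
  have nqq: "norm q = norm (norm q *\<^sub>R axis j (1::real))" by simp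
  obtain R :: "real^'m \<Rightarrow> real^'m" where R: "orthogonal_transformation R" and Rq: "R q = norm q *\<^sub>R axis j 1"
    using orthogonal_transformation_exists[OF nqq] by blast
  define Ri where "Ri = inv R"
  have Ri: "orthogonal_transformation Ri" using R by (simp add: Ri_def orthogonal_transformation_inv)
  have RRi: "R (Ri y) = y" for y
    using orthogonal_transformation_bij[OF R] unfolding Ri_def by (meson bij_inv_eq_iff)
  define G where "G = P \<circ> Ri"
  have linRi: "linear Ri" using Ri orthogonal_transformation_linear by blast
  have linG: "linear G" unfolding G_def using lin linRi linear_compose by blast
  have "norm (G y)^2 = norm y^2 - (q \<bullet> q) * (y$j)^2" for y
  proof -
    have "q \<bullet> Ri y = R q \<bullet> R (Ri y)"
      using R unfolding orthogonal_transformation_def by metis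
    also have "\<dots> = norm q * y$j" unfolding Rq RRi by (simp add: inner_axis')
    finally have "(q \<bullet> Ri y)^2 = (q \<bullet> q) * (y$j)^2"
      by (simp add: power_mult_distrib power2_norm_eq_inner[symmetric])
    moreover have "norm (Ri y) = norm y" using Ri orthogonal_transformation_norm by blast
    ultimately show ?thesis unfolding G_def o_def nq by simp
  qed
  then have "(det (matrix G))^2 = 1 - q \<bullet> q" by (rule det_gram_axis[OF linG])
  moreover have "matrix G = matrix P ** matrix Ri"
    unfolding G_def by (rule matrix_compose[OF linRi lin])
  moreover have "\<bar>det (matrix Ri)\<bar> = 1" using Ri by (rule orthogonal_transformation_det)
  ultimately have "\<bar>det (matrix P)\<bar>^2 = 1 - q \<bullet> q"
    by (metis (no_types, lifting) abs_mult det_mul mult.right_neutral power2_abs)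
  then show ?thesis
    by (metis abs_ge_zero real_sqrt_abs real_sqrt_unique)
qed

lemma sec_char:
  fixes v b :: "'i \<Rightarrow> real" and I :: "'i set"
  assumes fin: "finite I" and ct: "t < c" and t: "0 < t" and b: "\<And>i. i \<in> I \<Longrightarrow> \<bar>b i\<bar> \<le> t"
    and xk: "c * xk + (\<Sum>i\<in>I. b i * v i) = t"
  shows "(\<bar>xk\<bar> + (\<Sum>i\<in>I. \<bar>v i\<bar>) \<le> 1) \<longleftrightarrow> (\<Sum>i\<in>I. c * \<bar>v i\<bar> - b i * v i) \<le> c - t"
proof -
  define L where "L = (\<Sum>i\<in>I. \<bar>v i\<bar>)"
  define B where "B = (\<Sum>i\<in>I. b i * v i)"
  have L0: "L \<ge> 0" by (simp add: L_def sum_nonneg)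
  have BL: "B \<le> t * L"
  proof -
    have "B \<le> (\<Sum>i\<in>I. t * \<bar>v i\<bar>)" unfolding B_def
    proof (rule sum_mono)
      fix i assume "i \<in> I"
      then have "\<bar>b i\<bar> \<le> t" by (rule b)
      then have "\<bar>b i\<bar> * \<bar>v i\<bar> \<le> t * \<bar>v i\<bar>" by (simp add: mult_right_mono)
      then show "b i * v i \<le> t * \<bar>v i\<bar>" by (metis abs_ge_self abs_mult order_trans)
    qed
    then show ?thesis by (simp add: L_def sum_distrib_left)
  qed
  have S: "(\<Sum>i\<in>I. c * \<bar>v i\<bar> - b i * v i) = c * L - B"
    by (simp add: L_def B_def sum_subtractf sum_distrib_left)
  have c0: "c > 0" using ct t by simp
  have xk': "xk = (t - B) / c" using xk c0 by (simp add: B_def field_simps)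
  show ?thesis
  proof
    assume h: "\<bar>xk\<bar> + (\<Sum>i\<in>I. \<bar>v i\<bar>) \<le> 1"
    then have "L \<le> 1" by (simp add: L_def)
    then have "t * L \<le> t" using t by (simp add: mult_left_le)
    then have "B \<le> t" using BL by simp
    then have "xk \<ge> 0" using xk' c0 by simp
    then have "xk + L \<le> 1" using h by (simp add: L_def)
    then have "(t - B) / c + L \<le> 1" by (simp add: xk')
    then have "t - B + c * L \<le> c" using c0 by (simp add: field_simps)
    then show "(\<Sum>i\<in>I. c * \<bar>v i\<bar> - b i * v i) \<le> c - t" by (simp add: S)
  next
    assume h: "(\<Sum>i\<in>I. c * \<bar>v i\<bar> - b i * v i) \<le> c - t"
    then have h': "c * L - B \<le> c - t" by (simp add: S)
    have "B \<le> t"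
    proof (rule ccontr)
      assume "\<not> B \<le> t"
      then have "t < t * L" using BL by simp
      then have "1 < L" using t by simp
      then have "(c - t) * 1 < (c - t) * L" using ct by (intro mult_strict_left_mono) auto
      moreover have "(c - t) * L \<le> c * L - B" using BL by (simp add: algebra_simps)
      ultimately show False using h' by simp
    qed
    then have "xk \<ge> 0" using xk' c0 by simp
    moreover have "(t - B) / c + L \<le> 1" using h' c0 by (simp add: field_simps)
    ultimately show "\<bar>xk\<bar> + (\<Sum>i\<in>I. \<bar>v i\<bar>) \<le> 1" by (simp add: xk' L_def)
  qed
qed


lemma sum_split_sigma:
  fixes f :: "'n::finite \<Rightarrow> real" and \<sigma> :: "'m::finite \<Rightarrow> 'n"
  assumes inj: "inj \<sigma>" and rg: "range \<sigma> = -{k}"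
  shows "(\<Sum>j\<in>UNIV. f j) = f k + (\<Sum>i\<in>UNIV. f (\<sigma> i))"
proof -
  have "UNIV = insert k (range \<sigma>)" using rg by auto
  moreover have "k \<notin> range \<sigma>" using rg by auto
  ultimately have "(\<Sum>j\<in>UNIV. f j) = f k + (\<Sum>j\<in>range \<sigma>. f j)"
    by (metis finite sum.insert)
  also have "(\<Sum>j\<in>range \<sigma>. f j) = (\<Sum>i\<in>UNIV. f (\<sigma> i))"
    using inj by (simp add: sum.reindex)
  finally show ?thesis .
qed

lemma section_measure:
  fixes a :: "real^'n::finite" and U :: "real^'m::finite \<Rightarrow> real^'n" and \<sigma> :: "'m \<Rightarrow> 'n"
  assumes linU: "linear U" and nU: "\<And>y. norm (U y) = norm y" and rU: "range U = {x. a \<bullet> x = 0}"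
    and a1: "norm a = 1" and ct: "t < a$k" and t: "0 < t" and bt: "\<And>j. j \<noteq> k \<Longrightarrow> \<bar>a$j\<bar> \<le> t"
    and inj: "inj \<sigma>" and rg: "range \<sigma> = -{k}"
  shows "measure lebesgue {y. t *\<^sub>R a + U y \<in> cross_polytope}
       = measure lebesgue (skew_cross (a$k) (\<lambda>i. a$(\<sigma> i)) (a$k - t)) / a$k"
proof -
  define c where "c = a$k"
  define bb where "bb = (\<lambda>i. a$(\<sigma> i))"
  have c0: "c > 0" using ct t by (simp add: c_def)
  have bbt: "\<bar>bb i\<bar> \<le> t" for i
    using bt[of "\<sigma> i"] rg by (auto simp: bb_def)
  have aa: "a \<bullet> a = 1" using a1 by (simp add: dot_square_norm)
  have aU: "a \<bullet> U y = 0" for y using rU by auto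
  have ipU: "U x \<bullet> U y = x \<bullet> y" for x y
    using polar_quad[OF linU, of "\<lambda>_. 0" "\<lambda>_ _. 0"] nU by simp
  have "a \<bullet> (axis k 1 - c *\<^sub>R a) = 0"
    using aa by (simp add: inner_diff_right c_def inner_axis' inner_axis)
  then have "axis k 1 - c *\<^sub>R a \<in> range U" using rU by simp
  then obtain q where q: "U q = axis k 1 - c *\<^sub>R a" by auto
  have Uk: "(U y)$k = q \<bullet> y" for y
  proof -
    have "(U y)$k = axis k 1 \<bullet> U y" by (simp add: inner_axis')
    also have "axis k 1 = U q + c *\<^sub>R a" by (simp add: q)
    finally show ?thesis by (simp add: inner_add_left aU ipU)
  qed
  have qq: "q \<bullet> q = 1 - c^2"
  proof -
    have "q \<bullet> q = U q \<bullet> U q" by (simp add: ipU)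
    also have "\<dots> = 1 - 2 * c * (a$k) + c^2 * (a \<bullet> a)"
      by (simp add: q inner_diff_left inner_diff_right inner_axis' inner_axis inner_commute power2_eq_square algebra_simps)
    finally show ?thesis by (simp add: aa c_def power2_eq_square)
  qed
  define P where "P = (\<lambda>y. \<chi> i. (U y)$(\<sigma> i))"
  have linP: "linear P"
    using linU by (auto simp: P_def linear_iff vec_eq_iff)
  have sq_norm: "norm z ^ 2 = (\<Sum>j\<in>UNIV. (z$j)^2)" for z :: "real^'n"
    unfolding power2_norm_eq_inner by (simp add: inner_vec_def power2_eq_square)
  have sq_norm': "norm z ^ 2 = (\<Sum>j\<in>UNIV. (z$j)^2)" for z :: "real^'m"
    unfolding power2_norm_eq_inner by (simp add: inner_vec_def power2_eq_square)
  have nP: "norm (P y)^2 = norm y^2 - (q \<bullet> y)^2" for y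
  proof -
    have "norm (U y)^2 = ((U y)$k)^2 + norm (P y)^2"
      unfolding sq_norm sq_norm' by (simp add: sum_split_sigma[OF inj rg] P_def)
    then show ?thesis using nU[of y] Uk[of y] by simp
  qed
  have detP: "\<bar>det (matrix P)\<bar> = c"
  proof -
    have "q \<bullet> q \<le> 1" using qq by simp
    then have "\<bar>det (matrix P)\<bar> = sqrt (1 - q \<bullet> q)" by (rule det_gram[OF linP nP])
    also have "\<dots> = c" using qq c0 by simp
    finally show ?thesis .
  qed
  then have "inj P" using det_nz_iff_inj[OF linP] c0 by auto
  then have surjP: "surj P" using linP linear_injective_imp_surjective by blast
  define S where "S = {y. t *\<^sub>R a + U y \<in> cross_polytope}"
  have Slm: "S \<in> lmeasurable"
  proof -
    have "closed S"
    proof -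
      have contU: "continuous_on UNIV U"
        using linU by (simp add: linear_continuous_on linear_conv_bounded_linear)
      have "S = {y. (\<Sum>i\<in>UNIV. \<bar>(t *\<^sub>R a + U y) $ i\<bar>) \<le> 1}"
        by (simp add: S_def cross_polytope_def)
      also have "closed \<dots>"
        by (intro closed_Collect_le continuous_intros contU)
      finally show ?thesis .
    qed
    moreover have "bounded S"
    proof -
      have "S \<subseteq> cball 0 (1 + t)"
      proof
        fix y assume "y \<in> S"
        then have x: "(\<Sum>j\<in>UNIV. \<bar>(t *\<^sub>R a + U y)$j\<bar>) \<le> 1" by (simp add: S_def cross_polytope_def)
        have "norm (t *\<^sub>R a + U y) \<le> 1" using norm_le_l1_cart[of "t *\<^sub>R a + U y"] x by simp
        then have "norm (U y) \<le> 1 + t" using norm_triangle_ineq4[of "t *\<^sub>R a + U y" "t *\<^sub>R a"] a1 t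
          by (simp add: norm_minus_commute)
        then show "y \<in> cball 0 (1 + t)" by (simp add: nU)
      qed
      then show ?thesis using bounded_cball bounded_subset by blast
    qed
    ultimately show ?thesis by (intro lmeasurable_compact) (simp add: compact_eq_bounded_closed)
  qed
  define tb :: "real^'m" where "tb = (\<chi> i. t * bb i)"
  have char: "t *\<^sub>R a + U y \<in> cross_polytope \<longleftrightarrow> tb + P y \<in> skew_cross c bb (c - t)" for y
  proof -
    define x where "x = t *\<^sub>R a + U y"
    define v where "v = tb + P y"
    have vx: "v$i = x$(\<sigma> i)" for i by (simp add: v_def x_def tb_def P_def bb_def)
    have "a \<bullet> x = t" by (simp add: x_def inner_add_right aa aU)
    moreover have "a \<bullet> x = c * x$k + (\<Sum>i\<in>UNIV. bb i * v$i)"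
      by (simp add: inner_vec_def sum_split_sigma[OF inj rg] vx bb_def c_def)
    ultimately have eq: "c * x$k + (\<Sum>i\<in>UNIV. bb i * v$i) = t" by simp
    have "x \<in> cross_polytope \<longleftrightarrow> \<bar>x$k\<bar> + (\<Sum>i\<in>UNIV. \<bar>v$i\<bar>) \<le> 1"
      by (simp add: cross_polytope_def sum_split_sigma[OF inj rg] vx)
    also have "\<dots> \<longleftrightarrow> (\<Sum>i\<in>UNIV. c * \<bar>v$i\<bar> - bb i * v$i) \<le> c - t"
      by (rule sec_char[where v="\<lambda>i. v$i"]) (use ct t bbt eq in \<open>auto simp: c_def\<close>)
    finally show ?thesis by (simp add: x_def v_def skew_cross_def)
  qed
  have img: "(+) tb ` (P ` S) = skew_cross c bb (c - t)"
  proof (intro equalityI subsetI)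
    fix v assume "v \<in> (+) tb ` (P ` S)"
    then show "v \<in> skew_cross c bb (c - t)" using char by (auto simp: S_def)
  next
    fix v assume v: "v \<in> skew_cross c bb (c - t)"
    obtain y where y: "P y = v - tb" using surjP by (metis surjD)
    then have "tb + P y = v" by simp
    then have "y \<in> S" using char[of y] v by (simp add: S_def)
    then show "v \<in> (+) tb ` (P ` S)" using \<open>tb + P y = v\<close> by blast
  qed
  have "measure lebesgue (skew_cross c bb (c - t)) = measure lebesgue (P ` S)"
    unfolding img[symmetric] by (rule measure_translation)
  also have "\<dots> = c * measure lebesgue S"
    using measure_linear_image_fin[OF linP Slm] detP by simp
  finally show ?thesis using c0 by (simp add: S_def c_def bb_def)
qed



lemma deriv_common:
  fixes t :: real and m :: nat
  shows "((\<lambda>c. c^(m-1) * (c-t)^m) has_real_derivative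
          (real (m-1) * x^(m-1-1) * (x-t)^m + x^(m-1) * (real m * (x-t)^(m-1)))) (at x)"
  by (auto intro!: derivative_eq_intros)

lemma D_value:
  fixes t :: real and m :: nat
  assumes "m \<ge> 1"
  shows "real (m-1) * 1^(m-1-1) * (1-t)^m + 1^(m-1) * (real m * (1-t)^(m-1)) - (1-t)^m * (2 * real (m+1))
       = (1-t)^(m-1) * (real m - (real m + 3) * (1-t))"
proof -
  obtain m' where m: "m = Suc m'" using assms by (cases m) auto
  show ?thesis unfolding m by (simp add: algebra_simps)
qed

lemma ineq_max:
  fixes t :: real and m :: nat
  assumes m: "m \<ge> 1" and t1: "3 / (real m + 3) < t" and t2: "t < 1"
  shows "\<exists>d>0. \<forall>c. 1 - d < c \<and> c \<le> 1 \<longrightarrow> c^(m-1) * (c-t)^m \<le> (1-t)^m * ((real m + 1) * c^2 - real m)"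
proof -
  define F where "F = (\<lambda>c::real. c^(m-1) * (c-t)^m - (1-t)^m * ((real m + 1) * c^2 - real m))"
  have "(F has_real_derivative
     (real (m-1) * 1^(m-1-1) * (1-t)^m + 1^(m-1) * (real m * (1-t)^(m-1)) - (1-t)^m * (2 * real (m+1)))) (at 1)"
    unfolding F_def by (auto intro!: derivative_eq_intros deriv_common simp: algebra_simps)
  moreover have "0 < (1-t)^(m-1) * (real m - (real m + 3) * (1-t))"
  proof -
    have "(real m + 3) * (1 - t) < real m"
      using t1 by (simp add: field_simps)
    then show ?thesis using t2 by simp
  qed
  ultimately obtain d where d: "d > 0" "\<And>h. h > 0 \<Longrightarrow> h < d \<Longrightarrow> F (1 - h) < F 1"
    using DERIV_pos_inc_left D_value[OF m, of t] by metis
  have F1: "F 1 = 0" by (simp add: F_def)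
  show ?thesis
  proof (intro exI[of _ d] conjI allI impI)
    fix c :: real assume c: "1 - d < c \<and> c \<le> 1"
    show "c^(m-1) * (c-t)^m \<le> (1-t)^m * ((real m + 1) * c^2 - real m)"
    proof (cases "c = 1")
      case True then show ?thesis by simp
    next
      case False
      then have "F (1 - (1 - c)) < 0" using d(2)[of "1 - c"] c F1 by simp
      then show ?thesis by (simp add: F_def)
    qed
  qed (use d in auto)
qed

lemma ineq_min:
  fixes t :: real and m :: nat
  assumes m: "m \<ge> 1" and t1: "t < 3 / (real m + 3)" and t2: "0 < t"
  shows "\<exists>d>0. \<forall>c. 1 - d < c \<and> c \<le> 1 \<longrightarrow> (1-t)^m * (((real m + 1) * c^2 - 1) / real m)^m \<le> c^(m-1) * (c-t)^m"
proof -
  define F where "F = (\<lambda>c::real. c^(m-1) * (c-t)^m - (1-t)^m * (((real m + 1) * c^2 - 1) / real m)^m)"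
  have m0: "real m \<noteq> 0" using m by simp
  have "(F has_real_derivative
     (real (m-1) * 1^(m-1-1) * (1-t)^m + 1^(m-1) * (real m * (1-t)^(m-1)) - (1-t)^m * (2 * real (m+1)))) (at 1)"
  proof -
    define g where "g = (\<lambda>c::real. ((real m + 1) * c^2 - 1) / real m)"
    have g1: "g 1 = 1" using m0 by (simp add: g_def)
    have dg: "(g has_real_derivative ((real m + 1) * 2 / real m)) (at 1)"
      unfolding g_def using m0 by (auto intro!: derivative_eq_intros simp: field_simps)
    have dgm: "((\<lambda>c. g c ^ m) has_real_derivative (2 * real (m+1))) (at 1)"
    proof -
      have "((\<lambda>c. g c ^ m) has_real_derivative real m * (((real m + 1) * 2 / real m) * g 1 ^ (m - Suc 0))) (at 1)"
        by (rule DERIV_power[OF dg])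
      moreover have "real m * (((real m + 1) * 2 / real m) * g 1 ^ (m - Suc 0)) = 2 * real (m+1)"
        using m0 g1 by (simp add: field_simps)
      ultimately show ?thesis by simp
    qed
    have "F = (\<lambda>c. c^(m-1) * (c-t)^m - (1-t)^m * g c ^ m)" by (simp add: F_def g_def)
    then show ?thesis
      using DERIV_diff[OF deriv_common[of m t 1] DERIV_cmult[OF dgm, of "(1-t)^m"]] by simp
  qed
  moreover have "(1-t)^(m-1) * (real m - (real m + 3) * (1-t)) < 0"
  proof -
    have "real m < (real m + 3) * (1 - t)"
      using t1 by (simp add: field_simps)
    moreover have "t < 1"
    proof -
      have "t * real m + t * 3 < 3" using t1 by (simp add: field_simps)
      moreover have "t * real m \<ge> 0" using t2 by simp
      ultimately show ?thesis by linarith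
    qed
    ultimately show ?thesis by (simp add: mult_pos_neg)
  qed
  ultimately obtain d where d: "d > 0" "\<And>h. h > 0 \<Longrightarrow> h < d \<Longrightarrow> F 1 < F (1 - h)"
    using DERIV_neg_dec_left D_value[OF m, of t] by metis
  have F1: "F 1 = 0" using m0 by (simp add: F_def)
  show ?thesis
  proof (intro exI[of _ d] conjI allI impI)
    fix c :: real assume c: "1 - d < c \<and> c \<le> 1"
    show "(1-t)^m * (((real m + 1) * c^2 - 1) / real m)^m \<le> c^(m-1) * (c-t)^m"
    proof (cases "c = 1")
      case True then show ?thesis using m0 by simp
    next
      case False
      then have "0 < F (1 - (1 - c))" using d(2)[of "1 - c"] c F1 by simp
      then show ?thesis by (simp add: F_def)
    qed
  qed (use d in auto)
qed



lemma hp_spec: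
  fixes a :: "real^'n::finite"
  assumes a0: "a \<noteq> 0" and dim: "CARD('n) = CARD('m::finite) + 1"
  shows "linear (hyperplane_param TYPE('m) a) \<and> (\<forall>y. norm (hyperplane_param TYPE('m) a y) = norm y)
         \<and> range (hyperplane_param TYPE('m) a) = {x. a \<bullet> x = 0}"
proof -
  have "dim (UNIV :: (real^'m) set) = dim {x. a \<bullet> x = 0}"
    using dim_hyperplane[OF a0] dim by simp
  then obtain f g where f: "linear f" "f ` (UNIV :: (real^'m) set) = {x. a \<bullet> x = 0}"
      "\<And>x. x \<in> UNIV \<Longrightarrow> norm (f x) = norm x"
    using isometries_subspaces[OF subspace_UNIV subspace_hyperplane] by metis
  then have ex: "\<exists>U :: real^'m \<Rightarrow> real^'n. linear U \<and> (\<forall>y. norm (U y) = norm y) \<and> range U = {x. a \<bullet> x = 0}"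
    by blast
  show ?thesis unfolding hyperplane_param_def by (rule someI_ex[OF ex])
qed

lemma area_formula:
  fixes a :: "real^'n::finite" and \<sigma> :: "'m::finite \<Rightarrow> 'n"
  assumes dim: "CARD('n) = CARD('m) + 1" and a1: "norm a = 1" and ct: "t < a$k" and t: "0 < t"
    and bt: "\<And>j. j \<noteq> k \<Longrightarrow> \<bar>a$j\<bar> \<le> t" and inj: "inj \<sigma>" and rg: "range \<sigma> = -{k}"
  shows "section_area TYPE('m) a t = measure lebesgue (std_simplex :: (real^'m) set) *
           (\<Prod>i\<in>UNIV. 2 * a$k * (a$k - t) / ((a$k)^2 - (a$(\<sigma> i))^2)) / a$k"
proof -
  have a0: "a \<noteq> 0" using a1 by auto
  note U = hp_spec[OF a0 dim]
  have "section_area TYPE('m) a t = measure lebesgue (skew_cross (a$k) (\<lambda>i. a$(\<sigma> i)) (a$k - t)) / a$k"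
    unfolding section_area_def
    using section_measure[of "hyperplane_param TYPE('m) a" a t k \<sigma>] U a1 ct t bt inj rg by blast
  also have "measure lebesgue (skew_cross (a$k) (\<lambda>i. a$(\<sigma> i)) (a$k - t)) =
      measure lebesgue (std_simplex :: (real^'m) set) * (\<Prod>i\<in>UNIV. 2 * a$k * (a$k - t) / ((a$k)^2 - (a$(\<sigma> i))^2))"
  proof (rule measure_skew_cross)
    show "0 < a$k - t" using ct by simp
    fix i
    have "\<sigma> i \<noteq> k" using rg by auto
    then show "\<bar>a$(\<sigma> i)\<bar> < a$k" using bt[of "\<sigma> i"] ct by simp
  qed
  finally show ?thesis .
qed

lemma weier:
  fixes y :: "'i \<Rightarrow> real"
  assumes "finite I" "\<And>i. i \<in> I \<Longrightarrow> 0 \<le> y i \<and> y i \<le> 1"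
  shows "1 - (\<Sum>i\<in>I. y i) \<le> (\<Prod>i\<in>I. 1 - y i)"
  using assms
proof (induction I rule: finite_induct)
  case empty then show ?case by simp
next
  case (insert x F)
  have IH: "1 - (\<Sum>i\<in>F. y i) \<le> (\<Prod>i\<in>F. 1 - y i)" using insert by auto
  have yx: "0 \<le> y x" "y x \<le> 1" using insert by auto
  have S0: "0 \<le> (\<Sum>i\<in>F. y i)" using insert by (auto intro: sum_nonneg)
  have "1 - (y x + (\<Sum>i\<in>F. y i)) \<le> (1 - y x) * (1 - (\<Sum>i\<in>F. y i))"
    using yx S0 by (simp add: algebra_simps)
  also have "\<dots> \<le> (1 - y x) * (\<Prod>i\<in>F. 1 - y i)"
    using IH yx by (intro mult_left_mono) auto
  finally show ?case using insert by simp
qed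

lemma amgm:
  fixes x :: "'i \<Rightarrow> real"
  assumes fin: "finite I" and ne: "I \<noteq> {}" and x: "\<And>i. i \<in> I \<Longrightarrow> 0 \<le> x i"
  shows "(\<Prod>i\<in>I. x i) \<le> ((\<Sum>i\<in>I. x i) / card I) ^ card I"
proof -
  have cI: "card I > 0" using fin ne by (simp add: card_gt_0_iff)
  have P0: "(\<Prod>i\<in>I. x i) \<ge> 0" using x by (simp add: prod_nonneg)
  have A: "(\<Prod>i\<in>I. x i) powr (1 / card I) \<le> (\<Sum>i\<in>I. x i / card I)"
    by (rule arith_geom_mean[OF fin ne x])
  have A': "(\<Sum>i\<in>I. x i / card I) = (\<Sum>i\<in>I. x i) / card I" by (simp add: sum_divide_distrib)
  show ?thesis
  proof (cases "(\<Prod>i\<in>I. x i) = 0")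
    case True
    have "0 \<le> (\<Sum>i\<in>I. x i) / card I" using x by (simp add: sum_nonneg)
    then show ?thesis using True by simp
  next
    case False
    then have Ppos: "(\<Prod>i\<in>I. x i) > 0" using P0 by simp
    have "(\<Prod>i\<in>I. x i) = ((\<Prod>i\<in>I. x i) powr (1 / card I)) ^ card I"
    proof -
      have "((\<Prod>i\<in>I. x i) powr (1 / card I)) ^ card I = ((\<Prod>i\<in>I. x i) powr (1 / card I)) powr (real (card I))"
        using Ppos by (simp add: powr_realpow)
      also have "\<dots> = (\<Prod>i\<in>I. x i)" using cI Ppos by (simp add: powr_powr)
      finally show ?thesis by simp
    qed
    also have "\<dots> \<le> ((\<Sum>i\<in>I. x i) / card I) ^ card I"
      using A A' by (intro power_mono) auto
    finally show ?thesis .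
  qed
qed



lemma sigma_exists:
  fixes k :: "'n::finite"
  assumes dim: "CARD('n) = CARD('m::finite) + 1"
  shows "\<exists>\<sigma>::'m \<Rightarrow> 'n. inj \<sigma> \<and> range \<sigma> = -{k}"
proof -
  have "card (-{k}) = CARD('m)" using dim by (simp add: Compl_eq_Diff_UNIV card_Diff_singleton)
  then obtain h where "bij_betw h (UNIV::'m set) (-{k})"
    using finite_same_card_bij[of "UNIV::'m set" "-{k}"] by auto
  then show ?thesis by (metis bij_betw_imp_inj_on bij_betw_imp_surj_on)
qed

lemma near_e:
  fixes k :: "'n::finite"
  assumes t: "0 < t" "t < 1" and d0: "d0 > 0"
  shows "\<exists>e>0. \<forall>a::real^'n. norm a = 1 \<and> dist a (axis k 1) < e \<longrightarrow>
           t < a$k \<and> 1 - d0 < a$k \<and> a$k \<le> 1 \<and> (\<forall>j. j \<noteq> k \<longrightarrow> \<bar>a$j\<bar> \<le> t)"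
proof -
  define e where "e = min d0 (min t ((1-t)/2))"
  have e0: "0 < e" using t d0 by (simp add: e_def)
  have P: "t < a$k \<and> 1 - d0 < a$k \<and> a$k \<le> 1 \<and> (\<forall>j. j \<noteq> k \<longrightarrow> \<bar>a$j\<bar> \<le> t)"
    if a: "norm a = 1" "dist a (axis k 1) < e" for a :: "real^'n"
  proof -
    have comp: "\<bar>a$j - (axis k 1 :: real^'n)$j\<bar> < e" for j
      using component_le_norm_cart[of "a - axis k 1" j] a by (simp add: dist_norm)
    have ak: "\<bar>a$k - 1\<bar> < e" using comp[of k] by simp
    then have "\<bar>a$k - 1\<bar> < (1-t)/2" "\<bar>a$k - 1\<bar> < d0" by (simp_all add: e_def)
    then have h: "1 - (1-t)/2 < a$k" "1 - d0 < a$k" by (simp_all only: abs_less_iff) linarith+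
    have "t < a$k" using h t by (simp add: field_simps)
    moreover have "a$k \<le> 1" using component_le_norm_cart[of a k] a by simp
    moreover have "\<bar>a$j\<bar> \<le> t" if "j \<noteq> k" for j
      using comp[of j] that by (simp add: axis_def e_def)
    ultimately show ?thesis using h by blast
  qed
  show ?thesis using e0 P by blast
qed

lemma area_at_axis:
  fixes k :: "'n::finite" and \<sigma> :: "'m::finite \<Rightarrow> 'n"
  assumes dim: "CARD('n) = CARD('m) + 1" and t: "0 < t" "t < 1" and inj: "inj \<sigma>" and rg: "range \<sigma> = -{k}"
  shows "section_area TYPE('m) (axis k 1 :: real^'n) t = measure lebesgue (std_simplex :: (real^'m) set) * (2 * (1 - t)) ^ CARD('m)"
proof -
  have "section_area TYPE('m) (axis k 1 :: real^'n) t = measure lebesgue (std_simplex :: (real^'m) set) *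
           (\<Prod>i\<in>UNIV. 2 * (axis k 1::real^'n)$k * ((axis k 1::real^'n)$k - t) / (((axis k 1::real^'n)$k)^2 - ((axis k 1::real^'n)$(\<sigma> i))^2)) / (axis k 1::real^'n)$k"
  proof (rule area_formula[OF dim _ _ t(1) _ inj rg])
    show "norm (axis k 1::real^'n) = 1" by simp
  qed (use t in \<open>auto simp: axis_def\<close>)
  also have "(\<Prod>i\<in>UNIV. 2 * (axis k 1::real^'n)$k * ((axis k 1::real^'n)$k - t) / (((axis k 1::real^'n)$k)^2 - ((axis k 1::real^'n)$(\<sigma> i))^2)) = (\<Prod>i\<in>(UNIV::'m set). 2 * (1 - t))"
  proof (rule prod.cong[OF refl])
    fix i
    have "\<sigma> i \<noteq> k" using rg by auto
    then show "2 * (axis k 1::real^'n)$k * ((axis k 1::real^'n)$k - t) / (((axis k 1::real^'n)$k)^2 - ((axis k 1::real^'n)$(\<sigma> i))^2) = 2 * (1 - t)"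
      by (simp add: axis_def)
  qed
  finally show ?thesis by simp
qed

lemma near_facts:
  fixes a :: "real^'n::finite" and \<sigma> :: "'m::finite \<Rightarrow> 'n"
  assumes a1: "norm a = 1" and ct: "t < a$k" and t: "0 < t" and c1: "a$k \<le> 1"
    and bt: "\<And>j. j \<noteq> k \<Longrightarrow> \<bar>a$j\<bar> \<le> t" and inj: "inj \<sigma>" and rg: "range \<sigma> = -{k}"
  shows "(\<Sum>i\<in>UNIV. (a$k)^2 - (a$(\<sigma> i))^2) = (real CARD('m) + 1) * (a$k)^2 - 1"
    and "\<And>i. 0 < (a$k)^2 - (a$(\<sigma> i))^2 \<and> (a$k)^2 - (a$(\<sigma> i))^2 \<le> 1"
proof -
  have "1 = norm a ^ 2" using a1 by simp
  also have "\<dots> = (\<Sum>j\<in>UNIV. (a$j)^2)"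
    unfolding power2_norm_eq_inner by (simp add: inner_vec_def power2_eq_square)
  also have "\<dots> = (a$k)^2 + (\<Sum>i\<in>UNIV. (a$(\<sigma> i))^2)" by (rule sum_split_sigma[OF inj rg])
  finally have s: "(\<Sum>i\<in>UNIV. (a$(\<sigma> i))^2) = 1 - (a$k)^2" by simp
  show "(\<Sum>i\<in>UNIV. (a$k)^2 - (a$(\<sigma> i))^2) = (real CARD('m) + 1) * (a$k)^2 - 1"
    by (simp add: sum_subtractf s algebra_simps)
  fix i
  have "\<sigma> i \<noteq> k" using rg by auto
  then have "\<bar>a$(\<sigma> i)\<bar> < a$k" using bt[of "\<sigma> i"] ct by simp
  then have "(a$(\<sigma> i))^2 < (a$k)^2"
    by (metis abs_ge_zero abs_of_pos order_le_less_trans power2_abs power_strict_mono zero_less_numeral)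
  moreover have "(a$k)^2 \<le> 1" by (intro power_le_one) (use c1 ct t in auto)
  moreover have "0 \<le> (a$(\<sigma> i))^2" by simp
  ultimately show "0 < (a$k)^2 - (a$(\<sigma> i))^2 \<and> (a$k)^2 - (a$(\<sigma> i))^2 \<le> 1" by linarith
qed



lemma final_rewrite:
  fixes c r D :: real and m :: nat
  assumes c: "c > 0" and D: "D > 0" and m: "m \<ge> 1"
  shows "(2*c*r)^m / D / c = 2^m * (c^(m-1) * r^m / D)"
proof -
  obtain m' where m': "m = Suc m'" using m by (cases m) auto
  show ?thesis unfolding m' using c D by (simp add: field_simps power_mult_distrib)
qed

lemma prod_form:
  fixes d :: "'m::finite \<Rightarrow> real"
  shows "(\<Prod>i\<in>UNIV. X / d i) = X ^ CARD('m) / (\<Prod>i\<in>UNIV. d i)"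
  by (simp add: prod_dividef)

lemma local_max_main:
  fixes k :: "'n::finite" and t :: real
  assumes dim: "CARD('n) = CARD('m::finite) + 1" and t1: "3 / (real CARD('m) + 3) < t" and t2: "t < 1"
  shows "is_local_max_sphere (\<lambda>a. section_area TYPE('m) a t) (axis k 1 :: real^'n)"
proof -
  define m where "m = CARD('m)"
  have m1: "m \<ge> 1" by (simp add: m_def Suc_le_eq)
  have t0: "0 < t" using t1 by (smt (verit) divide_pos_pos of_nat_0_le_iff)
  obtain \<sigma> :: "'m \<Rightarrow> 'n" where inj: "inj \<sigma>" and rg: "range \<sigma> = -{k}"
    using sigma_exists[OF dim] by blast
  obtain d0 where d0: "d0 > 0" and ineq: "\<And>c. 1 - d0 < c \<and> c \<le> 1 \<Longrightarrow> c^(m-1) * (c-t)^m \<le> (1-t)^m * ((real m + 1) * c^2 - real m)"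
    using ineq_max[OF m1, of t] t1 t2 by (auto simp: m_def)
  obtain e where e0: "e > 0" and e: "\<And>a::real^'n. norm a = 1 \<and> dist a (axis k 1) < e \<Longrightarrow>
           t < a$k \<and> 1 - d0 < a$k \<and> a$k \<le> 1 \<and> (\<forall>j. j \<noteq> k \<longrightarrow> \<bar>a$j\<bar> \<le> t)"
    using near_e[OF t0 t2 d0, of k] by blast
  define M where "M = measure lebesgue (std_simplex :: (real^'m) set)"
  have M0: "M \<ge> 0" by (simp add: M_def)
  have Ve: "section_area TYPE('m) (axis k 1 :: real^'n) t = M * (2 * (1 - t)) ^ m"
    unfolding M_def m_def by (rule area_at_axis[OF dim t0 t2 inj rg])
  show ?thesis unfolding is_local_max_sphere_def
  proof (intro exI[of _ e] conjI allI impI)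
    show "e > 0" by fact
    fix a :: "real^'n" assume a: "norm a = 1 \<and> dist a (axis k 1) < e"
    note ae = e[OF a]
    define c where "c = a$k"
    define d where "d = (\<lambda>i. c^2 - (a$(\<sigma> i))^2)"
    have c0: "c > 0" using ae t0 by (simp add: c_def)
    have sumd: "(\<Sum>i\<in>UNIV. d i) = (real m + 1) * c^2 - 1"
      using near_facts(1)[of a t k \<sigma>] a ae t0 inj rg by (simp add: d_def c_def m_def)
    have dpos: "0 < d i \<and> d i \<le> 1" for i
      using near_facts(2)[of a t k \<sigma> i] a ae t0 inj rg by (simp add: d_def c_def)
    have Dpos: "(\<Prod>i\<in>UNIV. d i) > 0" using dpos by (simp add: prod_pos)
    have "1 - (\<Sum>i\<in>UNIV. 1 - d i) \<le> (\<Prod>i\<in>UNIV. 1 - (1 - d i))"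
      by (rule weier) (use dpos in \<open>auto intro: less_imp_le\<close>)
    then have W: "(real m + 1) * c^2 - real m \<le> (\<Prod>i\<in>UNIV. d i)"
      by (simp add: sum_subtractf sumd m_def)
    have "c^(m-1) * (c-t)^m \<le> (1-t)^m * ((real m + 1) * c^2 - real m)"
      using ineq ae by (simp add: c_def)
    also have "\<dots> \<le> (1-t)^m * (\<Prod>i\<in>UNIV. d i)"
      using W t2 by (intro mult_left_mono) auto
    finally have key: "c^(m-1) * (c-t)^m \<le> (1-t)^m * (\<Prod>i\<in>UNIV. d i)" .
    have Va: "section_area TYPE('m) a t = M * (\<Prod>i\<in>UNIV. 2 * c * (c - t) / d i) / c"
      unfolding M_def c_def d_def by (rule area_formula[OF dim _ _ t0 _ inj rg]) (use a ae in auto)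
    have "(\<Prod>i\<in>UNIV. 2 * c * (c - t) / d i) / c = 2^m * (c^(m-1) * (c-t)^m / (\<Prod>i\<in>UNIV. d i))"
      unfolding prod_form m_def[symmetric] by (rule final_rewrite[OF c0 Dpos m1])
    also have "\<dots> \<le> 2^m * (1-t)^m"
      using key Dpos by (intro mult_left_mono) (auto simp: divide_le_eq mult.commute)
    also have "\<dots> = (2 * (1 - t))^m" by (rule power_mult_distrib[symmetric])
    finally have "(\<Prod>i\<in>UNIV. 2 * c * (c - t) / d i) / c \<le> (2 * (1 - t))^m" .
    then have "M * ((\<Prod>i\<in>UNIV. 2 * c * (c - t) / d i) / c) \<le> M * (2 * (1 - t))^m"
      using M0 by (rule mult_left_mono)
    then show "section_area TYPE('m) a t \<le> section_area TYPE('m) (axis k 1 :: real^'n) t"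
      unfolding Va Ve by simp
  qed
qed

lemma local_min_main:
  fixes k :: "'n::finite" and t :: real
  assumes dim: "CARD('n) = CARD('m::finite) + 1" and t1: "t < 3 / (real CARD('m) + 3)" and t0: "0 < t"
  shows "is_local_min_sphere (\<lambda>a. section_area TYPE('m) a t) (axis k 1 :: real^'n)"
proof -
  define m where "m = CARD('m)"
  have m1: "m \<ge> 1" by (simp add: m_def Suc_le_eq)
  have t2: "t < 1"
  proof -
    have "t * real m + t * 3 < 3" using t1 by (simp add: field_simps m_def)
    moreover have "t * real m \<ge> 0" using t0 by simp
    ultimately show ?thesis by linarith
  qed
  obtain \<sigma> :: "'m \<Rightarrow> 'n" where inj: "inj \<sigma>" and rg: "range \<sigma> = -{k}"
    using sigma_exists[OF dim] by blast
  obtain d0 where d0: "d0 > 0" and ineq: "\<And>c. 1 - d0 < c \<and> c \<le> 1 \<Longrightarrow> (1-t)^m * (((real m + 1) * c^2 - 1) / real m)^m \<le> c^(m-1) * (c-t)^m"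
    using ineq_min[OF m1, of t] t1 t0 by (auto simp: m_def)
  obtain e where e0: "e > 0" and e: "\<And>a::real^'n. norm a = 1 \<and> dist a (axis k 1) < e \<Longrightarrow>
           t < a$k \<and> 1 - d0 < a$k \<and> a$k \<le> 1 \<and> (\<forall>j. j \<noteq> k \<longrightarrow> \<bar>a$j\<bar> \<le> t)"
    using near_e[OF t0 t2 d0, of k] by blast
  define M where "M = measure lebesgue (std_simplex :: (real^'m) set)"
  have M0: "M \<ge> 0" by (simp add: M_def)
  have Ve: "section_area TYPE('m) (axis k 1 :: real^'n) t = M * (2 * (1 - t)) ^ m"
    unfolding M_def m_def by (rule area_at_axis[OF dim t0 t2 inj rg])
  show ?thesis unfolding is_local_min_sphere_def
  proof (intro exI[of _ e] conjI allI impI)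
    show "e > 0" by fact
    fix a :: "real^'n" assume a: "norm a = 1 \<and> dist a (axis k 1) < e"
    note ae = e[OF a]
    define c where "c = a$k"
    define d where "d = (\<lambda>i. c^2 - (a$(\<sigma> i))^2)"
    have c0: "c > 0" using ae t0 by (simp add: c_def)
    have sumd: "(\<Sum>i\<in>UNIV. d i) = (real m + 1) * c^2 - 1"
      using near_facts(1)[of a t k \<sigma>] a ae t0 inj rg by (simp add: d_def c_def m_def)
    have dpos: "0 < d i \<and> d i \<le> 1" for i
      using near_facts(2)[of a t k \<sigma> i] a ae t0 inj rg by (simp add: d_def c_def)
    have Dpos: "(\<Prod>i\<in>UNIV. d i) > 0" using dpos by (simp add: prod_pos)
    have "(\<Prod>i\<in>UNIV. d i) \<le> ((\<Sum>i\<in>UNIV. d i) / card (UNIV::'m set)) ^ card (UNIV::'m set)"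
      by (rule amgm) (use dpos in \<open>auto intro: less_imp_le\<close>)
    then have W: "(\<Prod>i\<in>UNIV. d i) \<le> (((real m + 1) * c^2 - 1) / real m)^m"
      by (simp add: sumd m_def)
    have "(1-t)^m * (\<Prod>i\<in>UNIV. d i) \<le> (1-t)^m * (((real m + 1) * c^2 - 1) / real m)^m"
      using W t2 by (intro mult_left_mono) auto
    also have "\<dots> \<le> c^(m-1) * (c-t)^m"
      using ineq ae by (simp add: c_def)
    finally have key: "(1-t)^m * (\<Prod>i\<in>UNIV. d i) \<le> c^(m-1) * (c-t)^m" .
    have Va: "section_area TYPE('m) a t = M * (\<Prod>i\<in>UNIV. 2 * c * (c - t) / d i) / c"
      unfolding M_def c_def d_def by (rule area_formula[OF dim _ _ t0 _ inj rg]) (use a ae in auto)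
    have "(2 * (1 - t))^m = 2^m * (1-t)^m" by (rule power_mult_distrib)
    also have "\<dots> \<le> 2^m * (c^(m-1) * (c-t)^m / (\<Prod>i\<in>UNIV. d i))"
      using key Dpos by (intro mult_left_mono) (auto simp: le_divide_eq mult.commute)
    also have "\<dots> = (\<Prod>i\<in>UNIV. 2 * c * (c - t) / d i) / c"
      unfolding prod_form m_def[symmetric] by (rule final_rewrite[OF c0 Dpos m1, symmetric])
    finally have "(2 * (1 - t))^m \<le> (\<Prod>i\<in>UNIV. 2 * c * (c - t) / d i) / c" .
    then have "M * (2 * (1 - t))^m \<le> M * ((\<Prod>i\<in>UNIV. 2 * c * (c - t) / d i) / c)"
      using M0 by (rule mult_left_mono)
    then show "section_area TYPE('m) (axis k 1 :: real^'n) t \<le> section_area TYPE('m) a t"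
      unfolding Va Ve by simp
  qed
qed


theorem proposition3:
  fixes k :: "'n::finite" and t :: real
  assumes dim: "CARD('n) = CARD('m) + 1"
  shows "(CARD('n) \<ge> 3 \<and> 3 / (real CARD('n) + 2) < t \<and> t \<le> 1 / sqrt 2 \<longrightarrow>
            is_local_max_sphere (\<lambda>a. section_area TYPE('m::finite) a t) (axis k 1 :: real^'n))
       \<and> (CARD('n) \<ge> 3 \<and> 0 < t \<and> t < 3 / (real CARD('n) + 2) \<longrightarrow>
            is_local_min_sphere (\<lambda>a. section_area TYPE('m::finite) a t) (axis k 1 :: real^'n))
       \<and> (CARD('n) = 2 \<and> 0 < t \<and> t < 3 / 4 \<longrightarrow>
            is_local_min_sphere (\<lambda>a. section_area TYPE('m::finite) a t) (axis k 1 :: real^'n))"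
proof (intro conjI impI)
  have eq: "real CARD('n) + 2 = real CARD('m) + 3" using dim by simp
  assume h: "CARD('n) \<ge> 3 \<and> 3 / (real CARD('n) + 2) < t \<and> t \<le> 1 / sqrt 2"
  have "1 / sqrt 2 < (1::real)" by (simp add: divide_less_eq)
  then have "t < 1" using h by linarith
  moreover have "3 / (real CARD('m) + 3) < t" using h eq by simp
  ultimately show "is_local_max_sphere (\<lambda>a. section_area TYPE('m::finite) a t) (axis k 1 :: real^'n)"
    using local_max_main[OF dim] by blast
next
  have eq: "real CARD('n) + 2 = real CARD('m) + 3" using dim by simp
  assume h: "CARD('n) \<ge> 3 \<and> 0 < t \<and> t < 3 / (real CARD('n) + 2)"
  then have "t < 3 / (real CARD('m) + 3)" "0 < t" using eq by simp_all
  then show "is_local_min_sphere (\<lambda>a. section_area TYPE('m::finite) a t) (axis k 1 :: real^'n)"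
    using local_min_main[OF dim] by blast
next
  assume h: "CARD('n) = 2 \<and> 0 < t \<and> t < 3 / 4"
  then have "CARD('m) = 1" using dim by simp
  then have "t < 3 / (real CARD('m) + 3)" "0 < t" using h by simp_all
  then show "is_local_min_sphere (\<lambda>a. section_area TYPE('m::finite) a t) (axis k 1 :: real^'n)"
    using local_min_main[OF dim] by blast
qed

end
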